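(* Suppose there exists $\alpha>0$ such that $G_{ii}=\alpha$ for all $i\in\{1,\dots,p\}$. Then the function $F(u):=p\log\big(\sum_{i=1}^pe^{(Bu)_i}G_{ii}\big)-\sum_{i=1}^p(Bu)_i$ on $\mathbb{R}^H$ admits $u=0$ as its unique minimizer; consequently the associated rescaling matrix $\mathrm{diag}(\exp(Bu))$ is the identity.
   Context: $\mathcal G=(V,E)$ is a finite DAG; input neurons have no incoming edges, output neurons no outgoing edges, hidden neurons $\mathcal H$ ($H=|\mathcal H|$) are the rest. $\theta\in\mathbb{R}^p$ consists of one weight per edge and one bias $b_v$ per non-input neuron $v$. For $h\in\mathcal H$, $\mathrm{in}_h$ = indices of $b_h$ and of weights of edges entering $h$, $\mathrm{out}_h$ = indices of weights of edges leaving $h$. $B\in\mathbb{R}^{p\times H}$ has $B_{ih}=-1$ if $i\in\mathrm{in}_h$, $1$ if $i\in\mathrm{out}_h$, $0$ otherwise. $G=\partial\Phi(\theta)^\top\partial\Phi(\theta)$ where $\Phi:\mathbb{R}^p\to\mathbb{R}^q$ is the path-lifting: for each path $v_0\to\cdots\to v_d$ along edges ending at an output neuron (for $d=0$, $v_0$ non-input), the coordinate is the product of the weights along the path, times $b_{v_0}$ if $v_0$ is not an input neuron. *)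

theory Defs
  imports "HOL-Analysis.Analysis"
begin

datatype 'v param = W "'v \<times> 'v" | Bias 'v

definition dag_network :: "'v set \<Rightarrow> ('v \<times> 'v) set \<Rightarrow> 'v set \<Rightarrow> 'v set \<Rightarrow> bool" where
  "dag_network V E Inp Out \<longleftrightarrow> finite V \<and> E \<subseteq> V \<times> V \<and> acyclic E \<and>
     Inp \<subseteq> V \<and> Out \<subseteq> V \<and> Inp \<inter> Out = {} \<and>
     (\<forall>(a, b) \<in> E. b \<notin> Inp \<and> a \<notin> Out)"

definition hidden :: "'v set \<Rightarrow> 'v set \<Rightarrow> 'v set \<Rightarrow> 'v set" where
  "hidden V Inp Out = V - Inp - Out"

definition params :: "'v set \<Rightarrow> ('v \<times> 'v) set \<Rightarrow> 'v set \<Rightarrow> 'v param set" where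
  "params V E Inp = W ` E \<union> Bias ` (V - Inp)"

definition in_set :: "('v \<times> 'v) set \<Rightarrow> 'v \<Rightarrow> 'v param set" where
  "in_set E h = insert (Bias h) (W ` {e \<in> E. snd e = h})"

definition out_set :: "('v \<times> 'v) set \<Rightarrow> 'v \<Rightarrow> 'v param set" where
  "out_set E h = W ` {e \<in> E. fst e = h}"

definition Bmat :: "('v \<times> 'v) set \<Rightarrow> 'v param \<Rightarrow> 'v \<Rightarrow> real" where
  "Bmat E i h = (if i \<in> in_set E h then -1 else if i \<in> out_set E h then 1 else 0)"

definition Bmul :: "('v \<times> 'v) set \<Rightarrow> 'v set \<Rightarrow> ('v \<Rightarrow> real) \<Rightarrow> 'v param \<Rightarrow> real" where
  "Bmul E H u i = (\<Sum>h\<in>H. Bmat E i h * u h)"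

definition paths :: "'v set \<Rightarrow> ('v \<times> 'v) set \<Rightarrow> 'v set \<Rightarrow> 'v set \<Rightarrow> 'v list set" where
  "paths V E Inp Out = {xs. xs \<noteq> [] \<and> set xs \<subseteq> V \<and>
      (\<forall>k. Suc k < length xs \<longrightarrow> (xs ! k, xs ! Suc k) \<in> E) \<and>
      last xs \<in> Out \<and> (length xs = 1 \<longrightarrow> hd xs \<notin> Inp)}"

definition path_edges :: "'v list \<Rightarrow> ('v \<times> 'v) list" where
  "path_edges xs = zip xs (tl xs)"

definition path_lift :: "'v set \<Rightarrow> ('v param \<Rightarrow> real) \<Rightarrow> 'v list \<Rightarrow> real" where
  "path_lift Inp \<theta> xs =
     prod_list (map (\<lambda>e. \<theta> (W e)) (path_edges xs)) *
     (if hd xs \<in> Inp then 1 else \<theta> (Bias (hd xs)))"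

definition jac :: "'v set \<Rightarrow> ('v param \<Rightarrow> real) \<Rightarrow> 'v list \<Rightarrow> 'v param \<Rightarrow> real" where
  "jac Inp \<theta> xs i = deriv (\<lambda>t. path_lift Inp (\<theta>(i := t)) xs) (\<theta> i)"

definition gram :: "'v set \<Rightarrow> ('v \<times> 'v) set \<Rightarrow> 'v set \<Rightarrow> 'v set \<Rightarrow> ('v param \<Rightarrow> real)
    \<Rightarrow> 'v param \<Rightarrow> 'v param \<Rightarrow> real" where
  "gram V E Inp Out \<theta> i j = (\<Sum>xs\<in>paths V E Inp Out. jac Inp \<theta> xs i * jac Inp \<theta> xs j)"

definition rescale_obj :: "'v set \<Rightarrow> ('v \<times> 'v) set \<Rightarrow> 'v set \<Rightarrow> 'v set \<Rightarrow> ('v param \<Rightarrow> real)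
    \<Rightarrow> ('v \<Rightarrow> real) \<Rightarrow> real" where
  "rescale_obj V E Inp Out \<theta> u =
     real (card (params V E Inp)) *
       ln (\<Sum>i\<in>params V E Inp. exp (Bmul E (hidden V Inp Out) u i) * gram V E Inp Out \<theta> i i)
     - (\<Sum>i\<in>params V E Inp. Bmul E (hidden V Inp Out) u i)"

definition vecs_on :: "'v set \<Rightarrow> ('v \<Rightarrow> real) set" where
  "vecs_on H = {u. \<forall>v. v \<notin> H \<longrightarrow> u v = 0}"

end

theory Submission
  imports Defs
begin

lemma exp_strict: "(y::real) \<noteq> 0 \<Longrightarrow> 1 + y < exp y"
  using exp_minus_greater[of "-y"] by simp

lemma exp_tangent: "exp (m::real) * (1 + (y - m)) \<le> exp y"
proof -
  have "1 + (y - m) \<le> exp (y - m)" by (rule exp_ge_add_one_self)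
  hence "exp m * (1 + (y - m)) \<le> exp m * exp (y - m)" by simp
  thus ?thesis by (simp add: exp_diff)
qed

lemma exp_tangent_strict: "y \<noteq> (m::real) \<Longrightarrow> exp m * (1 + (y - m)) < exp y"
proof -
  assume "y \<noteq> m"
  hence "1 + (y - m) < exp (y - m)" by (intro exp_strict) simp
  hence "exp m * (1 + (y - m)) < exp m * exp (y - m)" by simp
  thus ?thesis by (simp add: exp_diff)
qed

lemma jensen_key:
  fixes x :: "'a \<Rightarrow> real"
  assumes fin: "finite P" and ne: "P \<noteq> {}"
  defines "m \<equiv> (\<Sum>i\<in>P. x i) / real (card P)"
  shows "real (card P) * exp m \<le> (\<Sum>i\<in>P. exp (x i))"
    and "(\<exists>j\<in>P. x j \<noteq> m) \<Longrightarrow> real (card P) * exp m < (\<Sum>i\<in>P. exp (x i))"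
proof -
  have cp: "real (card P) > 0" using fin ne by (simp add: card_gt_0_iff)
  have "(\<Sum>i\<in>P. exp m * (1 + (x i - m))) = exp m * (real (card P) + (\<Sum>i\<in>P. x i) - real (card P) * m)"
    by (simp add: sum_distrib_left[symmetric] sum.distrib sum_subtractf)
  also have "\<dots> = real (card P) * exp m" using cp by (simp add: m_def)
  finally have eq: "(\<Sum>i\<in>P. exp m * (1 + (x i - m))) = real (card P) * exp m" .
  have "(\<Sum>i\<in>P. exp m * (1 + (x i - m))) \<le> (\<Sum>i\<in>P. exp (x i))"
    by (intro sum_mono exp_tangent)
  thus "real (card P) * exp m \<le> (\<Sum>i\<in>P. exp (x i))" using eq by simp
  assume "\<exists>j\<in>P. x j \<noteq> m"
  then obtain j where "j \<in> P" "x j \<noteq> m" by blast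
  hence "(\<Sum>i\<in>P. exp m * (1 + (x i - m))) < (\<Sum>i\<in>P. exp (x i))"
    using fin by (intro sum_strict_mono_ex1) (auto intro: exp_tangent exp_tangent_strict)
  thus "real (card P) * exp m < (\<Sum>i\<in>P. exp (x i))" using eq by simp
qed

lemma obj_bound:
  fixes x :: "'a \<Rightarrow> real" and \<alpha> :: real
  assumes fin: "finite P" and ne: "P \<noteq> {}" and a: "\<alpha> > 0"
  defines "m \<equiv> (\<Sum>i\<in>P. x i) / real (card P)"
  shows "real (card P) * ln (real (card P) * \<alpha>) \<le>
           real (card P) * ln (\<Sum>i\<in>P. exp (x i) * \<alpha>) - (\<Sum>i\<in>P. x i)"
    and "(\<exists>j\<in>P. x j \<noteq> m) \<Longrightarrow> real (card P) * ln (real (card P) * \<alpha>) <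
           real (card P) * ln (\<Sum>i\<in>P. exp (x i) * \<alpha>) - (\<Sum>i\<in>P. x i)"
proof -
  define n where "n = real (card P)"
  have cp: "n > 0" using fin ne by (simp add: card_gt_0_iff n_def)
  have T: "(\<Sum>i\<in>P. x i) = n * m" using cp by (simp add: m_def n_def)
  have S: "(\<Sum>i\<in>P. exp (x i) * \<alpha>) = (\<Sum>i\<in>P. exp (x i)) * \<alpha>" by (simp add: sum_distrib_right)
  have base: "ln (n * exp m * \<alpha>) = ln (n * \<alpha>) + m"
    using cp a by (simp add: ln_mult)
  have J1: "n * exp m \<le> (\<Sum>i\<in>P. exp (x i))" using jensen_key(1)[OF fin ne, of x] by (simp add: n_def m_def)
  have "ln (n * exp m * \<alpha>) \<le> ln ((\<Sum>i\<in>P. exp (x i)) * \<alpha>)"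
    using J1 cp a by (intro ln_mono) auto
  hence "n * ln (n * \<alpha>) + n * m \<le> n * ln ((\<Sum>i\<in>P. exp (x i)) * \<alpha>)"
    using base cp by (simp add: distrib_left[symmetric])
  thus "real (card P) * ln (real (card P) * \<alpha>) \<le>
           real (card P) * ln (\<Sum>i\<in>P. exp (x i) * \<alpha>) - (\<Sum>i\<in>P. x i)"
    using T S by (simp add: n_def)
  assume "\<exists>j\<in>P. x j \<noteq> m"
  hence J2: "n * exp m < (\<Sum>i\<in>P. exp (x i))" using jensen_key(2)[OF fin ne, of x] by (simp add: n_def m_def)
  have "ln (n * exp m * \<alpha>) < ln ((\<Sum>i\<in>P. exp (x i)) * \<alpha>)"
  proof -
    have "0 < n * exp m" using cp by simp
    hence "0 < (\<Sum>i\<in>P. exp (x i))" using J2 by linarith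
    thus ?thesis using J2 cp a by (subst ln_less_cancel_iff) auto
  qed
  hence "n * ln (n * \<alpha>) + n * m < n * ln ((\<Sum>i\<in>P. exp (x i)) * \<alpha>)"
    using base cp by (simp add: distrib_left[symmetric])
  thus "real (card P) * ln (real (card P) * \<alpha>) <
           real (card P) * ln (\<Sum>i\<in>P. exp (x i) * \<alpha>) - (\<Sum>i\<in>P. x i)"
    using T S by (simp add: n_def)
qed


lemma Bmul_zero: "Bmul E H (\<lambda>_. 0) i = 0"
  by (simp add: Bmul_def)

lemma Bmul_bias:
  assumes "finite H" "h \<in> H"
  shows "Bmul E H u (Bias h) = - u h"
proof -
  have "\<And>h'. Bmat E (Bias h) h' * u h' = (if h' = h then - u h else 0)"
    by (auto simp: Bmat_def in_set_def out_set_def)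
  thus ?thesis using assms by (simp add: Bmul_def)
qed

lemma Bmul_bias_out:
  assumes "ov \<notin> H"
  shows "Bmul E H u (Bias ov) = 0"
proof -
  have "\<And>h'. h' \<in> H \<Longrightarrow> Bmat E (Bias ov) h' * u h' = 0"
    using assms by (auto simp: Bmat_def in_set_def out_set_def)
  thus ?thesis unfolding Bmul_def by (intro sum.neutral) blast
qed

lemma Bmul_edge_out:
  assumes "finite H" "(a, ov) \<in> E" "ov \<notin> H"
  shows "Bmul E H u (W (a, ov)) = (if a \<in> H then u a else 0)"
proof -
  have "\<And>h'. h' \<in> H \<Longrightarrow> Bmat E (W (a, ov)) h' * u h' = (if h' = a then u a else 0)"
    using assms by (auto simp: Bmat_def in_set_def out_set_def)
  hence "Bmul E H u (W (a, ov)) = (\<Sum>h'\<in>H. if h' = a then u a else 0)"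
    unfolding Bmul_def by (rule sum.cong[OF refl])
  thus ?thesis using assms by simp
qed

theorem propositionJ1:
  fixes V :: "'v set" and E :: "('v \<times> 'v) set" and Inp Out :: "'v set"
    and \<theta> :: "'v param \<Rightarrow> real" and \<alpha> :: real
  assumes "dag_network V E Inp Out"
    and "\<alpha> > 0"
    and "\<forall>i\<in>params V E Inp. gram V E Inp Out \<theta> i i = \<alpha>"
  shows "{u \<in> vecs_on (hidden V Inp Out).
            \<forall>u' \<in> vecs_on (hidden V Inp Out).
              rescale_obj V E Inp Out \<theta> u \<le> rescale_obj V E Inp Out \<theta> u'} = {(\<lambda>_. 0)}
         \<and> (\<forall>i\<in>params V E Inp. \<forall>j\<in>params V E Inp.
              (if i = j then exp (Bmul E (hidden V Inp Out) (\<lambda>_. 0) i) else 0)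
              = (if i = j then 1 else (0::real)))"
proof -
  define H where "H = hidden V Inp Out"
  define P where "P = params V E Inp"
  have dag: "finite V" "E \<subseteq> V \<times> V" "Inp \<subseteq> V" "Out \<subseteq> V" "Inp \<inter> Out = {}"
    "\<And>a b. (a, b) \<in> E \<Longrightarrow> b \<notin> Inp \<and> a \<notin> Out"
    using assms(1) unfolding dag_network_def by auto
  have finE: "finite E" using dag(1,2) finite_subset by blast
  have finH: "finite H" using dag(1) by (simp add: H_def hidden_def)
  have finP: "finite P" using dag(1) finE by (simp add: P_def params_def)
  have obj: "rescale_obj V E Inp Out \<theta> u =
     real (card P) * ln (\<Sum>i\<in>P. exp (Bmul E H u i) * \<alpha>) - (\<Sum>i\<in>P. Bmul E H u i)" for u
    unfolding rescale_obj_def H_def[symmetric] P_def[symmetric]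
    using assms(3) by (simp add: P_def)
  have part2: "\<forall>i\<in>P. \<forall>j\<in>P.
              (if i = j then exp (Bmul E H (\<lambda>_. 0) i) else 0) = (if i = j then 1 else (0::real))"
    by (simp add: Bmul_zero)
  have zero_in: "(\<lambda>_. 0) \<in> vecs_on H" by (simp add: vecs_on_def)
  have part1: "{u \<in> vecs_on H. \<forall>u' \<in> vecs_on H.
       rescale_obj V E Inp Out \<theta> u \<le> rescale_obj V E Inp Out \<theta> u'} = {(\<lambda>_. 0)}"
  proof (cases "P = {}")
    case True
    hence "V - Inp = {}" by (auto simp: P_def params_def)
    hence "H = {}" by (auto simp: H_def hidden_def)
    hence "vecs_on H = {(\<lambda>_. 0)}" by (auto simp: vecs_on_def)
    thus ?thesis by auto
  next
    case ne: False
    define F0 where "F0 = real (card P) * ln (real (card P) * \<alpha>)"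
    have objF0: "rescale_obj V E Inp Out \<theta> (\<lambda>_. 0) = F0"
      by (simp add: obj Bmul_zero F0_def)
    have lb: "F0 \<le> rescale_obj V E Inp Out \<theta> u" for u
      unfolding obj F0_def by (rule obj_bound(1)[OF finP ne assms(2)])
    obtain i0 where "i0 \<in> P" using ne by blast
    hence "gram V E Inp Out \<theta> i0 i0 = \<alpha>" using assms(3) by (simp add: P_def)
    hence "paths V E Inp Out \<noteq> {}" using assms(2) by (auto simp: gram_def)
    then obtain xs where xs: "xs \<in> paths V E Inp Out" by blast
    have uniq: "u = (\<lambda>_. 0)" if uH: "u \<in> vecs_on H"
      and le: "rescale_obj V E Inp Out \<theta> u \<le> F0" for u
    proof -
      define c where "c = (\<Sum>i\<in>P. Bmul E H u i) / real (card P)"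
      have const: "\<forall>j\<in>P. Bmul E H u j = c"
      proof (rule ccontr)
        assume "\<not> ?thesis"
        hence "\<exists>j\<in>P. Bmul E H u j \<noteq> c" by blast
        from obj_bound(2)[OF finP ne assms(2), of "Bmul E H u", folded c_def, OF this]
        have "F0 < rescale_obj V E Inp Out \<theta> u" unfolding obj F0_def .
        thus False using le by simp
      qed
      have c0: "c = 0"
      proof -
        let ?o = "last xs"
        have xsne: "xs \<noteq> []" and oOut: "?o \<in> Out" and setV: "set xs \<subseteq> V"
          and edges: "\<And>k. Suc k < length xs \<Longrightarrow> (xs ! k, xs ! Suc k) \<in> E"
          and len1: "length xs = 1 \<longrightarrow> hd xs \<notin> Inp"
          using xs by (auto simp: paths_def)
        have oH: "?o \<notin> H" using oOut by (simp add: H_def hidden_def)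
        show ?thesis
        proof (cases "length xs = 1")
          case True
          hence "hd xs = ?o" using xsne by (cases xs) auto
          hence oI: "?o \<notin> Inp" using len1 True by simp
          have "?o \<in> V" using setV xsne by auto
          hence "Bias ?o \<in> P" using oI by (simp add: P_def params_def)
          thus ?thesis using const Bmul_bias_out[OF oH] by force
        next
          case False
          hence L: "Suc (length xs - 2) < length xs" "Suc (length xs - 2) = length xs - 1"
            using xsne by (cases xs; auto)+
          define a where "a = xs ! (length xs - 2)"
          have e: "(a, ?o) \<in> E" using edges[OF L(1)] L(2) xsne
            by (simp add: a_def last_conv_nth)
          have eP: "W (a, ?o) \<in> P" using e by (simp add: P_def params_def)
          have v1: "c = (if a \<in> H then u a else 0)"
            using const eP Bmul_edge_out[OF finH e oH, of u] by simp
          show ?thesis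
          proof (cases "a \<in> H")
            case True
            have "a \<in> V" "a \<notin> Inp" using True by (auto simp: H_def hidden_def)
            hence "Bias a \<in> P" by (simp add: P_def params_def)
            hence "c = - u a" using const Bmul_bias[OF finH True, of E u] by simp
            thus ?thesis using v1 True by simp
          next
            case False
            thus ?thesis using v1 by simp
          qed
        qed
      qed
      show ?thesis
      proof
        fix v
        show "u v = 0"
        proof (cases "v \<in> H")
          case True
          have "v \<in> V" "v \<notin> Inp" using True by (auto simp: H_def hidden_def)
          hence "Bias v \<in> P" by (simp add: P_def params_def)
          thus ?thesis using const c0 Bmul_bias[OF finH True, of E u] by simp
        next
          case False
          thus ?thesis using uH by (simp add: vecs_on_def)
        qed
      qed
    qed
    show ?thesis
    proof (intro equalityI subsetI)
      fix u assume "u \<in> {u \<in> vecs_on H. \<forall>u' \<in> vecs_on H.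
        rescale_obj V E Inp Out \<theta> u \<le> rescale_obj V E Inp Out \<theta> u'}"
      hence "u \<in> vecs_on H" "rescale_obj V E Inp Out \<theta> u \<le> F0"
        using zero_in objF0 by force+
      thus "u \<in> {(\<lambda>_. 0)}" using uniq by simp
    next
      fix u assume "u \<in> {(\<lambda>_. 0 :: real) :: 'v \<Rightarrow> real}"
      thus "u \<in> {u \<in> vecs_on H. \<forall>u' \<in> vecs_on H.
        rescale_obj V E Inp Out \<theta> u \<le> rescale_obj V E Inp Out \<theta> u'}"
        using zero_in objF0 lb by auto
    qed
  qed
  show ?thesis using part1 part2 unfolding H_def P_def by blast
qed

end
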